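(* Let $d,k\ge1$, let $\pi(a|s)$ be a policy on actions $a\in\{0,\dots,k-1\}$ and states $s\in\{1,\dots,d\}$, and let $M=(M^a)_a$ be nonnegative $d\times d$ matrices with $\sum_{s'}M^a_{ss'}=\pi(a|s)$ for all $a,s$ and with $M^+:=\sum_aM^a$ entrywise strictly positive. Define the linear map $A'$ on $\Delta\in\mathbb{R}^{d\times d}$ by $$A'(\Delta)=\Big(\big(L_a(\Delta)\big)_{a},\ \big(\textstyle\sum_{s'}M^a_{ss'}\Delta_{ss'}\big)_{a,s}\Big),$$ where $$L_a(\Delta)=(M^aM^+)\odot\big[M^+(M^+\odot\Delta)+(M^+\odot\Delta)M^+\big]-\big[(M^a\odot\Delta)M^+ + M^a(M^+\odot\Delta)\big]\odot (M^+)^2 .$$ If $A'$ has full rank $d^2$ (i.e. $A'(\Delta)=0$ implies $\Delta=0$), then there exists $\varepsilon>0$ such that every family $W=(W^a)_a$ of nonnegative $d\times d$ matrices with $\sum_{s'}W^a_{ss'}=\pi(a|s)$ for all $a,s$, with $W^+:=\sum_aW^a$ entrywise strictly positive, with $\max_{a,s,s'}|W^a_{ss'}-M^a_{ss'}|<\varepsilon$, and satisfying $$M^a\oslash M^+=W^a\oslash W^+\quad\text{and}\quad M^aM^+\oslash(M^+)^2=W^aW^+\oslash(W^+)^2\qquad\text{for all } a,$$ is equal to $M$.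
   Context: $\odot$ and $\oslash$ denote entrywise multiplication and division of matrices; juxtaposition and $(M^+)^2=M^+M^+$ denote ordinary matrix products. $M^a_{ss'}$ represents $\pi(a|s)p(s'|s,a)$; the two displayed equations say that $W$ and $M$ have the same one-step inverse model $p(a|s,s')$ and the same two-step first-action inverse model $p(a|s,s'')$. $L_a(\Delta)$ is the part linear in $\Delta$ of $M^aM^+\odot(W^+)^2-W^aW^+\odot(M^+)^2$ when $W^a=M^a\odot(1+\Delta)$. *)

theory Defs
  imports Complex_Main
begin

type_synonym 's mat = "'s \<Rightarrow> 's \<Rightarrow> real"

definition mmul :: "('s::finite) mat \<Rightarrow> 's mat \<Rightarrow> 's mat" where
  "mmul A B = (\<lambda>s s''. \<Sum>s'\<in>UNIV. A s s' * B s' s'')"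

definition hmul :: "'s mat \<Rightarrow> 's mat \<Rightarrow> 's mat" where
  "hmul A B = (\<lambda>s s'. A s s' * B s s')"

definition hdiv :: "'s mat \<Rightarrow> 's mat \<Rightarrow> 's mat" where
  "hdiv A B = (\<lambda>s s'. A s s' / B s s')"

definition madd :: "'s mat \<Rightarrow> 's mat \<Rightarrow> 's mat" where
  "madd A B = (\<lambda>s s'. A s s' + B s s')"

definition msub :: "'s mat \<Rightarrow> 's mat \<Rightarrow> 's mat" where
  "msub A B = (\<lambda>s s'. A s s' - B s s')"

definition mplus :: "('a::finite \<Rightarrow> 's mat) \<Rightarrow> 's mat" where
  "mplus M = (\<lambda>s s'. \<Sum>a\<in>UNIV. M a s s')"

definition Lmap :: "('a::finite \<Rightarrow> ('s::finite) mat) \<Rightarrow> 'a \<Rightarrow> 's mat \<Rightarrow> 's mat" where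
  "Lmap M a D =
     msub (hmul (mmul (M a) (mplus M))
                (madd (mmul (mplus M) (hmul (mplus M) D)) (mmul (hmul (mplus M) D) (mplus M))))
          (hmul (madd (mmul (hmul (M a) D) (mplus M)) (mmul (M a) (hmul (mplus M) D)))
                (mmul (mplus M) (mplus M)))"

definition Aprime_zero :: "('a::finite \<Rightarrow> ('s::finite) mat) \<Rightarrow> 's mat \<Rightarrow> bool" where
  "Aprime_zero M D \<longleftrightarrow>
     (\<forall>a. Lmap M a D = (\<lambda>_ _. 0)) \<and> (\<forall>a s. (\<Sum>s'\<in>UNIV. M a s s' * D s s') = 0)"

definition admissible :: "('a::finite \<Rightarrow> 's::finite \<Rightarrow> real) \<Rightarrow> ('a \<Rightarrow> 's mat) \<Rightarrow> bool" where
  "admissible pol M \<longleftrightarrow>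
     (\<forall>a s s'. 0 \<le> M a s s') \<and> (\<forall>a s. (\<Sum>s'\<in>UNIV. M a s s') = pol a s)
     \<and> (\<forall>s s'. 0 < mplus M s s')"

definition is_policy :: "('a::finite \<Rightarrow> 's \<Rightarrow> real) \<Rightarrow> bool" where
  "is_policy pol \<longleftrightarrow> (\<forall>a s. 0 \<le> pol a s) \<and> (\<forall>s. (\<Sum>a\<in>UNIV. pol a s) = 1)"

end

theory Submission
  imports Defs "HOL-Analysis.Analysis"
begin

lemma inj_small:
  fixes f :: "'v::euclidean_space \<Rightarrow> 'w::euclidean_space"
  assumes lf: "linear f" and z: "\<And>x. f x = 0 \<Longrightarrow> x = 0" and gb: "\<And>x. norm (g x) \<le> K * (norm x)^2"
  shows "\<exists>\<delta>>0. \<forall>x. norm x < \<delta> \<and> f x = g x \<longrightarrow> x = 0"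
proof -
  have "inj f" using lf z linear_inj_iff_eq_0 by blast
  then obtain B where B: "B>0" "\<And>x. B * norm x \<le> norm (f x)"
    using linear_inj_bounded_below_pos[OF lf] by blast
  show ?thesis
  proof (intro exI[of _ "B/(\<bar>K\<bar>+1)"] conjI allI impI)
    show "0 < B/(\<bar>K\<bar>+1)" using B by simp
    fix x assume h: "norm x < B/(\<bar>K\<bar>+1) \<and> f x = g x"
    show "x = 0"
    proof (rule ccontr)
      assume "x\<noteq>0" then have n: "norm x > 0" by simp
      have "B * norm x \<le> K * norm x * norm x" using B(2)[of x] h gb[of x] by (simp add: power2_eq_square mult.assoc)
      then have "B \<le> K * norm x" using n by simp
      also have "\<dots> \<le> (\<bar>K\<bar>+1) * norm x" using n by (intro mult_right_mono) auto
      finally have "B/(\<bar>K\<bar>+1) \<le> norm x" by (simp add: field_simps add_pos_nonneg)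
      with h show False by simp
    qed
  qed
qed

lemma Lmap_add: "Lmap M a (\<lambda>s t. D1 s t + D2 s t) = (\<lambda>s t. Lmap M a D1 s t + Lmap M a D2 s t)"
  unfolding Lmap_def msub_def hmul_def madd_def mmul_def
  by (auto simp: algebra_simps sum.distrib)

lemma Lmap_scale: "Lmap M a (\<lambda>s t. c * D s t) = (\<lambda>s t. c * Lmap M a D s t)"
  unfolding Lmap_def msub_def hmul_def madd_def mmul_def
  by (auto simp: algebra_simps sum.distrib sum_distrib_left)

definition Qmap :: "('a::finite \<Rightarrow> ('s::finite) mat) \<Rightarrow> 'a \<Rightarrow> 's mat \<Rightarrow> 's mat" where
  "Qmap M a D = (\<lambda>s u. mmul (M a) (mplus M) s u * (\<Sum>t\<in>UNIV. mplus M s t * D s t * (mplus M t u * D t u))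
      - (\<Sum>t\<in>UNIV. M a s t * D s t * (mplus M t u * D t u)) * mmul (mplus M) (mplus M) s u)"

lemma key_identity:
  fixes M :: "'a::finite \<Rightarrow> ('s::finite) mat"
  assumes W: "\<And>a s t. W a s t = M a s t * (1 + D s t)"
  shows "mmul (M a) (mplus M) s u * mmul (mplus W) (mplus W) s u - mmul (W a) (mplus W) s u * mmul (mplus M) (mplus M) s u
     = Lmap M a D s u + Qmap M a D s u"
proof -
  have Wp: "mplus W s t = mplus M s t * (1 + D s t)" for s t
    unfolding mplus_def W by (simp add: sum_distrib_right)
  show ?thesis
    unfolding Lmap_def Qmap_def msub_def hmul_def madd_def mmul_def Wp W
    by (simp add: algebra_simps sum.distrib sum_subtractf)
qed


lemma quad_bound:
  fixes D :: "'s::finite \<Rightarrow> 's \<Rightarrow> real"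
  assumes c: "\<And>t. 0 \<le> c t" and e: "\<And>t. 0 \<le> e t" and Db: "\<And>s t. \<bar>D s t\<bar> \<le> n"
  shows "\<bar>\<Sum>t\<in>UNIV. c t * D s t * (e t * D t u)\<bar> \<le> (\<Sum>t\<in>UNIV. c t * e t) * n^2"
proof -
  have "\<bar>\<Sum>t\<in>UNIV. c t * D s t * (e t * D t u)\<bar> \<le> (\<Sum>t\<in>UNIV. \<bar>c t * D s t * (e t * D t u)\<bar>)"
    by (rule sum_abs)
  also have "\<dots> \<le> (\<Sum>t\<in>UNIV. c t * e t * n^2)"
  proof (rule sum_mono)
    fix t
    have "\<bar>D s t\<bar> * \<bar>D t u\<bar> \<le> n * n" using Db by (intro mult_mono) (auto intro: order_trans[OF abs_ge_zero Db])
    then have "(c t * e t) * (\<bar>D s t\<bar> * \<bar>D t u\<bar>) \<le> (c t * e t) * (n * n)"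
      using c e by (intro mult_left_mono) auto
    then show "\<bar>c t * D s t * (e t * D t u)\<bar> \<le> c t * e t * n^2"
      using c[of t] e[of t] by (simp add: abs_mult power2_eq_square mult_ac)
  qed
  also have "\<dots> = (\<Sum>t\<in>UNIV. c t * e t) * n^2" by (simp add: sum_distrib_right)
  finally show ?thesis .
qed

lemma aux_abs: "0 \<le> (A::real) \<Longrightarrow> 0 \<le> P \<Longrightarrow> \<bar>A*X - Y*P\<bar> \<le> A*\<bar>X\<bar> + \<bar>Y\<bar>*P"
proof -
  assume "0 \<le> A" "0 \<le> P"
  have "\<bar>A*X - Y*P\<bar> \<le> \<bar>A*X\<bar> + \<bar>Y*P\<bar>" by (rule abs_triangle_ineq4)
  also have "\<dots> = A*\<bar>X\<bar> + \<bar>Y\<bar>*P" using \<open>0 \<le> A\<close> \<open>0 \<le> P\<close> by (simp add: abs_mult)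
  finally show ?thesis .
qed

lemma Qmap_bound:
  fixes M :: "'a::finite \<Rightarrow> ('s::finite) mat"
  assumes M0: "\<And>a s t. 0 \<le> M a s t" and Db: "\<And>s t. \<bar>D s t\<bar> \<le> n"
  shows "\<bar>Qmap M a D s u\<bar> \<le> 2 * mmul (M a) (mplus M) s u * mmul (mplus M) (mplus M) s u * n^2"
proof -
  have Mp: "0 \<le> mplus M s t" for s t unfolding mplus_def using M0 by (simp add: sum_nonneg)
  have A0: "0 \<le> mmul (M a) (mplus M) s u" unfolding mmul_def using M0 Mp by (simp add: sum_nonneg)
  have P0: "0 \<le> mmul (mplus M) (mplus M) s u" unfolding mmul_def using Mp by (simp add: sum_nonneg)
  have b1: "\<bar>\<Sum>t\<in>UNIV. mplus M s t * D s t * (mplus M t u * D t u)\<bar> \<le> mmul (mplus M) (mplus M) s u * n^2"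
    unfolding mmul_def by (rule quad_bound[OF Mp Mp Db])
  have b2: "\<bar>\<Sum>t\<in>UNIV. M a s t * D s t * (mplus M t u * D t u)\<bar> \<le> mmul (M a) (mplus M) s u * n^2"
    unfolding mmul_def by (rule quad_bound[OF M0 Mp Db])
  have "\<bar>Qmap M a D s u\<bar> \<le> mmul (M a) (mplus M) s u * \<bar>\<Sum>t\<in>UNIV. mplus M s t * D s t * (mplus M t u * D t u)\<bar>
      + \<bar>\<Sum>t\<in>UNIV. M a s t * D s t * (mplus M t u * D t u)\<bar> * mmul (mplus M) (mplus M) s u"
    unfolding Qmap_def using A0 P0 by (rule aux_abs)
  also have "\<dots> \<le> mmul (M a) (mplus M) s u * (mmul (mplus M) (mplus M) s u * n^2)
      + (mmul (M a) (mplus M) s u * n^2) * mmul (mplus M) (mplus M) s u"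
    using A0 P0 b1 b2 by (intro add_mono mult_left_mono mult_right_mono) auto
  finally show ?thesis by (simp add: algebra_simps)
qed


theorem proposition3:
  fixes pol :: "'a::finite \<Rightarrow> 's::finite \<Rightarrow> real"
    and M :: "'a \<Rightarrow> 's \<Rightarrow> 's \<Rightarrow> real"
  assumes "is_policy pol"
    and "admissible pol M"
    and "\<forall>D. Aprime_zero M D \<longrightarrow> D = (\<lambda>_ _. 0)"
  shows "\<exists>\<epsilon>>0. \<forall>W :: 'a \<Rightarrow> 's \<Rightarrow> 's \<Rightarrow> real.
           admissible pol W
           \<and> (\<forall>a s s'. \<bar>W a s s' - M a s s'\<bar> < \<epsilon>)
           \<and> (\<forall>a. hdiv (M a) (mplus M) = hdiv (W a) (mplus W))
           \<and> (\<forall>a. hdiv (mmul (M a) (mplus M)) (mmul (mplus M) (mplus M))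
                 = hdiv (mmul (W a) (mplus W)) (mmul (mplus W) (mplus W)))
           \<longrightarrow> W = M"
proof -
  from assms(2) have M0: "\<And>a s t. 0 \<le> M a s t" and Mrow: "\<And>a s. (\<Sum>s'\<in>UNIV. M a s s') = pol a s"
    and Mpos: "\<And>s t. 0 < mplus M s t" unfolding admissible_def by auto
  define Dof :: "real^('s\<times>'s) \<Rightarrow> 's mat" where "Dof x = (\<lambda>s t. x$(s,t))" for x
  define f :: "real^('s\<times>'s) \<Rightarrow> (real^('a\<times>'s\<times>'s)) \<times> (real^('a\<times>'s))" where
    "f x = ((\<chi> p. Lmap M (fst p) (Dof x) (fst (snd p)) (snd (snd p))),
            (\<chi> p. \<Sum>t\<in>UNIV. M (fst p) (snd p) t * x$(snd p, t)))" for x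
  define Kq where "Kq p = 2 * mmul (M (fst p)) (mplus M) (fst (snd p)) (snd (snd p))
      * mmul (mplus M) (mplus M) (fst (snd p)) (snd (snd p))" for p :: "'a\<times>'s\<times>'s"
  define g :: "real^('s\<times>'s) \<Rightarrow> (real^('a\<times>'s\<times>'s)) \<times> (real^('a\<times>'s))" where
    "g x = ((\<chi> p. - Qmap M (fst p) (Dof x) (fst (snd p)) (snd (snd p))), 0)" for x
  have Dadd: "Dof (x+y) = (\<lambda>s t. Dof x s t + Dof y s t)" for x y unfolding Dof_def by simp
  have Dsc: "Dof (c *\<^sub>R x) = (\<lambda>s t. c * Dof x s t)" for c x unfolding Dof_def by simp
  have lf: "linear f"
  proof (rule linearI)
    fix x y show "f (x+y) = f x + f y"
      unfolding f_def Dadd Lmap_add by (simp add: vec_eq_iff algebra_simps sum.distrib)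
  next
    fix c x show "f (c *\<^sub>R x) = c *\<^sub>R f x"
      unfolding f_def Dsc Lmap_scale by (simp add: vec_eq_iff algebra_simps sum_distrib_left)
  qed
  have fz: "x = 0" if "f x = 0" for x
  proof -
    have "Aprime_zero M (Dof x)" using that unfolding Aprime_zero_def f_def
      by (auto simp: vec_eq_iff Dof_def fun_eq_iff zero_prod_def)
    then have "Dof x = (\<lambda>_ _. 0)" using assms(3) by blast
    then have "\<forall>s t. x$(s,t) = 0" unfolding Dof_def by (metis)
    then show "x = 0" by (simp add: vec_eq_iff)
  qed
  have gb: "norm (g x) \<le> (\<Sum>p\<in>UNIV. Kq p) * (norm x)^2" for x
  proof -
    have Db: "\<bar>Dof x s t\<bar> \<le> norm x" for s t unfolding Dof_def by (rule component_le_norm_cart)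
    have "norm (g x) = norm (\<chi> p. - Qmap M (fst p) (Dof x) (fst (snd p)) (snd (snd p)))"
      unfolding g_def by (simp add: norm_prod_def)
    also have "\<dots> \<le> (\<Sum>p\<in>UNIV. \<bar>(\<chi> p. - Qmap M (fst p) (Dof x) (fst (snd p)) (snd (snd p))) $ p\<bar>)"
      by (rule norm_le_l1_cart)
    also have "\<dots> \<le> (\<Sum>p\<in>UNIV. Kq p * (norm x)^2)"
      by (rule sum_mono) (simp add: Kq_def, rule Qmap_bound[OF M0 Db])
    finally show ?thesis by (simp add: sum_distrib_right)
  qed
  obtain \<delta> where \<delta>: "\<delta> > 0" "\<And>x. norm x < \<delta> \<and> f x = g x \<Longrightarrow> x = 0"
    using inj_small[OF lf fz gb] by blast
  define S where "S = (\<Sum>p\<in>(UNIV::('s\<times>'s) set). 1 / mplus M (fst p) (snd p))"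
  have invS: "1 / mplus M s t \<le> S" for s t
  proof -
    have "1 / mplus M (fst (s,t)) (snd (s,t)) \<le> S" unfolding S_def
      by (rule member_le_sum) (auto intro: less_imp_le Mpos)
    then show ?thesis by simp
  qed
  have S0: "0 \<le> S" unfolding S_def by (rule sum_nonneg) (auto intro: less_imp_le Mpos)
  define C where "C = real CARD('s\<times>'s) * real CARD('a) * S"
  have C0: "0 \<le> C" unfolding C_def using S0 by simp
  show ?thesis
  proof (intro exI[of _ "\<delta>/(C+1)"] conjI allI impI)
    show "0 < \<delta>/(C+1)" using \<delta>(1) C0 by simp
    fix W :: "'a \<Rightarrow> 's \<Rightarrow> 's \<Rightarrow> real"
    assume H: "admissible pol W
           \<and> (\<forall>a s s'. \<bar>W a s s' - M a s s'\<bar> < \<delta>/(C+1))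
           \<and> (\<forall>a. hdiv (M a) (mplus M) = hdiv (W a) (mplus W))
           \<and> (\<forall>a. hdiv (mmul (M a) (mplus M)) (mmul (mplus M) (mplus M))
                 = hdiv (mmul (W a) (mplus W)) (mmul (mplus W) (mplus W)))"
    then have Wrow: "\<And>a s. (\<Sum>s'\<in>UNIV. W a s s') = pol a s"
      and Wpos: "\<And>s t. 0 < mplus W s t" 
      and close: "\<And>a s t. \<bar>W a s t - M a s t\<bar> < \<delta>/(C+1)"
      and h1: "\<And>a. hdiv (M a) (mplus M) = hdiv (W a) (mplus W)"
      and h2: "\<And>a. hdiv (mmul (M a) (mplus M)) (mmul (mplus M) (mplus M))
                 = hdiv (mmul (W a) (mplus W)) (mmul (mplus W) (mplus W))"
      unfolding admissible_def by auto
    define D where "D s t = mplus W s t / mplus M s t - 1" for s t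
    have Wrep: "W a s t = M a s t * (1 + D s t)" for a s t
    proof -
      have "hdiv (M a) (mplus M) s t = hdiv (W a) (mplus W) s t" using h1[of a] by simp
      then have "M a s t / mplus M s t = W a s t / mplus W s t" unfolding hdiv_def .
      then show ?thesis using Mpos[of s t] Wpos[of s t] unfolding D_def by (simp add: field_simps)
    qed
    define x :: "real^('s\<times>'s)" where "x = (\<chi> p. D (fst p) (snd p))"
    have Dx: "Dof x = D" unfolding Dof_def x_def by simp
    have fx: "f x = g x"
    proof -
      have L: "Lmap M a D s u = - Qmap M a D s u" for a s u
      proof -
        have P: "mmul (mplus M) (mplus M) s u > 0" and P': "mmul (mplus W) (mplus W) s u > 0"
          unfolding mmul_def by (intro sum_pos; auto intro: mult_pos_pos Mpos Wpos)+
        have "hdiv (mmul (M a) (mplus M)) (mmul (mplus M) (mplus M)) s u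
                 = hdiv (mmul (W a) (mplus W)) (mmul (mplus W) (mplus W)) s u" using h2[of a] by simp
        then have "mmul (M a) (mplus M) s u * mmul (mplus W) (mplus W) s u - mmul (W a) (mplus W) s u * mmul (mplus M) (mplus M) s u = 0"
          using P P' unfolding hdiv_def by (simp add: field_simps)
        with key_identity[of W M D a s u] Wrep show ?thesis by simp
      qed
      have R: "(\<Sum>t\<in>UNIV. M a s t * D s t) = 0" for a s
      proof -
        have "(\<Sum>t\<in>UNIV. W a s t) = (\<Sum>t\<in>UNIV. M a s t) + (\<Sum>t\<in>UNIV. M a s t * D s t)"
          by (simp add: Wrep algebra_simps sum.distrib)
        with Wrow Mrow show ?thesis by simp
      qed
      show ?thesis unfolding f_def g_def Dx using L R by (simp add: vec_eq_iff x_def)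
    qed
    have nx: "norm x < \<delta>"
    proof -
      define e where "e = \<delta>/(C+1)"
      have Db: "\<bar>D s t\<bar> \<le> real CARD('a) * e * S" for s t
      proof -
        have "mplus W s t - mplus M s t = (\<Sum>a\<in>UNIV. W a s t - M a s t)" unfolding mplus_def
          by (simp add: sum_subtractf)
        also have "\<bar>\<dots>\<bar> \<le> (\<Sum>a\<in>UNIV. \<bar>W a s t - M a s t\<bar>)" by (rule sum_abs)
        also have "\<dots> \<le> (\<Sum>a\<in>(UNIV::'a set). e)" unfolding e_def by (rule sum_mono) (simp add: close less_imp_le)
        finally have b: "\<bar>mplus W s t - mplus M s t\<bar> \<le> real CARD('a) * e" by simp
        have "D s t = (mplus W s t - mplus M s t) * (1 / mplus M s t)" unfolding D_def
          using Mpos[of s t] by (simp add: field_simps)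
        then have "\<bar>D s t\<bar> = \<bar>mplus W s t - mplus M s t\<bar> * (1 / mplus M s t)"
          using Mpos[of s t] by (simp add: abs_mult)
        also have "\<dots> \<le> (real CARD('a) * e) * S"
          using b invS[of s t] Mpos[of s t] by (intro mult_mono) auto
        finally show ?thesis .
      qed
      have "norm x \<le> (\<Sum>p\<in>UNIV. \<bar>x $ p\<bar>)" by (rule norm_le_l1_cart)
      also have "\<dots> \<le> (\<Sum>p\<in>(UNIV::('s\<times>'s) set). real CARD('a) * e * S)"
        by (rule sum_mono) (simp add: x_def Db)
      also have "\<dots> = C * e" unfolding C_def by simp
      also have "\<dots> < \<delta>" unfolding e_def using C0 \<delta>(1) by (simp add: field_simps)
      finally show ?thesis .
    qed
    from \<delta>(2) nx fx have "x = 0" by blast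
    then have "D s t = 0" for s t using Dx unfolding Dof_def by (metis vec_lambda_beta x_def zero_index)
    then show "W = M" using Wrep by (simp add: fun_eq_iff)
  qed
qed

end
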